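(* Let $W,E_0,E\in\mathcal G$ with $W$ adjacent to $E_0$, $E$ distant from $E_0$, and $W$ not distant from $E$. Then $W\cap E$ is a point (i.e. $\dim(W\cap E)=1$).
   Context: $K$ is a (not necessarily commutative) field and $V$ is a left vector space over $K$ of arbitrary (possibly infinite) dimension with $\dim V>2$. $\mathcal G:=\{X\le V\mid X\cong V/X\}$, assumed nonempty. Points are $1$-dimensional subspaces. $X,Y\in\mathcal G$ are adjacent if $\dim((X+Y)/X)=\dim((X+Y)/Y)=1$ (equivalently $\dim(X/(X\cap Y))=\dim(Y/(X\cap Y))=1$), and distant if $V=X\oplus Y$. *)

theory Defs
  imports Main
begin

(* Left vector space over a (not necessarily commutative) field K, i.e. a
   division ring.  The carrier of V is the whole type 'v; smul is left scalar
   multiplication. *)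
definition left_vector_space :: "('k::division_ring \<Rightarrow> 'v::ab_group_add \<Rightarrow> 'v) \<Rightarrow> bool" where
  "left_vector_space smul \<longleftrightarrow>
     (\<forall>a x y. smul a (x + y) = smul a x + smul a y) \<and>
     (\<forall>a b x. smul (a + b) x = smul a x + smul b x) \<and>
     (\<forall>a b x. smul (a * b) x = smul a (smul b x)) \<and>
     (\<forall>x. smul 1 x = x)"

definition subspace :: "('k::division_ring \<Rightarrow> 'v::ab_group_add \<Rightarrow> 'v) \<Rightarrow> 'v set \<Rightarrow> bool" where
  "subspace smul X \<longleftrightarrow> 0 \<in> X \<and> (\<forall>x\<in>X. \<forall>y\<in>X. x + y \<in> X) \<and> (\<forall>a. \<forall>x\<in>X. smul a x \<in> X)"

definition dim_gt_2 :: "('k::division_ring \<Rightarrow> 'v::ab_group_add \<Rightarrow> 'v) \<Rightarrow> bool" where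
  "dim_gt_2 smul \<longleftrightarrow> (\<exists>u v w. \<forall>a b c. smul a u + smul b v + smul c w = 0 \<longrightarrow> a = 0 \<and> b = 0 \<and> c = 0)"

(* X \<cong> V/X: there is a K-linear bijection from X onto the quotient V/X.
   A map X \<rightarrow> V/X is given by a representative map g : X \<rightarrow> V (the class of g x
   being g x + X); linearity, injectivity and surjectivity are stated modulo X. *)
definition iso_quot :: "('k::division_ring \<Rightarrow> 'v::ab_group_add \<Rightarrow> 'v) \<Rightarrow> 'v set \<Rightarrow> bool" where
  "iso_quot smul X \<longleftrightarrow> (\<exists>g::'v \<Rightarrow> 'v.
      (\<forall>x\<in>X. \<forall>y\<in>X. g (x + y) - (g x + g y) \<in> X) \<and>
      (\<forall>a. \<forall>x\<in>X. g (smul a x) - smul a (g x) \<in> X) \<and>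
      (\<forall>x\<in>X. g x \<in> X \<longrightarrow> x = 0) \<and>
      (\<forall>v. \<exists>x\<in>X. v - g x \<in> X))"

definition Gr :: "('k::division_ring \<Rightarrow> 'v::ab_group_add \<Rightarrow> 'v) \<Rightarrow> 'v set set" where
  "Gr smul = {X. subspace smul X \<and> iso_quot smul X}"

definition sum_sp :: "'v::ab_group_add set \<Rightarrow> 'v set \<Rightarrow> 'v set" where
  "sum_sp X Y = {x + y | x y. x \<in> X \<and> y \<in> Y}"

definition codim1 :: "('k::division_ring \<Rightarrow> 'v::ab_group_add \<Rightarrow> 'v) \<Rightarrow> 'v set \<Rightarrow> 'v set \<Rightarrow> bool" where
  "codim1 smul X Y \<longleftrightarrow> X \<subseteq> Y \<and> (\<exists>v\<in>Y. v \<notin> X \<and> Y = {x + smul a v | x a. x \<in> X})"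

definition adjacent :: "('k::division_ring \<Rightarrow> 'v::ab_group_add \<Rightarrow> 'v) \<Rightarrow> 'v set \<Rightarrow> 'v set \<Rightarrow> bool" where
  "adjacent smul X Y \<longleftrightarrow> codim1 smul X (sum_sp X Y) \<and> codim1 smul Y (sum_sp X Y)"

definition distant :: "'v::ab_group_add set \<Rightarrow> 'v set \<Rightarrow> bool" where
  "distant X Y \<longleftrightarrow> sum_sp X Y = UNIV \<and> X \<inter> Y = {0}"

definition is_point :: "('k::division_ring \<Rightarrow> 'v::ab_group_add \<Rightarrow> 'v) \<Rightarrow> 'v set \<Rightarrow> bool" where
  "is_point smul P \<longleftrightarrow> (\<exists>v. v \<noteq> 0 \<and> P = range (\<lambda>a. smul a v))"

end

theory Submission
  imports Defs
begin

lemma lvs_simps: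
  assumes "left_vector_space s"
  shows "s a (x + y) = s a x + s a y" "s (a + b) x = s a x + s b x"
    "s (a * b) x = s a (s b x)" "s 1 x = x"
  using assms unfolding left_vector_space_def by auto

lemma lvs_zero_left:
  assumes "left_vector_space s" shows "s 0 x = 0"
proof -
  have "s (0 + 0) x = s 0 x + s 0 x" by (rule lvs_simps(2)[OF assms])
  then show ?thesis by simp
qed

lemma lvs_zero_right:
  assumes "left_vector_space s" shows "s a 0 = 0"
proof -
  have "s a (0 + 0) = s a 0 + s a 0" by (rule lvs_simps(1)[OF assms])
  then show ?thesis by simp
qed

lemma lvs_neg_left:
  assumes "left_vector_space s" shows "s (- a) x = - s a x"
proof -
  have "s (a + - a) x = s a x + s (-a) x" by (rule lvs_simps(2)[OF assms])
  then have "s a x + s (-a) x = 0" using lvs_zero_left[OF assms] by simp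
  then show ?thesis by (metis minus_unique)
qed

lemma lvs_neg_right:
  assumes "left_vector_space s" shows "s a (- x) = - s a x"
proof -
  have "s a (x + - x) = s a x + s a (-x)" by (rule lvs_simps(1)[OF assms])
  then have "s a x + s a (-x) = 0" using lvs_zero_right[OF assms] by simp
  then show ?thesis by (metis minus_unique)
qed

lemma lvs_diff_right:
  assumes "left_vector_space s" shows "s a (x - y) = s a x - s a y"
  using lvs_simps(1)[OF assms, of a x "-y"] lvs_neg_right[OF assms] by simp

lemma lvs_cancel:
  assumes "left_vector_space s" "s a x = 0" "a \<noteq> 0" shows "x = 0"
proof -
  have "x = s (inverse a * a) x" using assms(3) lvs_simps(4)[OF assms(1)] by simp
  also have "\<dots> = s (inverse a) (s a x)" by (rule lvs_simps(3)[OF assms(1)])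
  also have "\<dots> = 0" using assms(2) lvs_zero_right[OF assms(1)] by simp
  finally show ?thesis .
qed

lemma sub_neg:
  assumes "left_vector_space s" "subspace s X" "x \<in> X" shows "- x \<in> X"
proof -
  have "s (-1) x \<in> X" using assms unfolding subspace_def by blast
  then show ?thesis using lvs_neg_left[OF assms(1), of 1 x] lvs_simps(4)[OF assms(1)] by simp
qed

lemma sub_add:
  assumes "subspace s X" "x \<in> X" "y \<in> X" shows "x + y \<in> X"
  using assms unfolding subspace_def by blast

lemma sub_smul:
  assumes "subspace s X" "x \<in> X" shows "s a x \<in> X"
  using assms unfolding subspace_def by blast

lemma sub_zero:
  assumes "subspace s X" shows "0 \<in> X"
  using assms unfolding subspace_def by blast

lemma sub_diff:
  assumes "left_vector_space s" "subspace s X" "x \<in> X" "y \<in> X" shows "x - y \<in> X"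
  using sub_add[OF assms(2,3) sub_neg[OF assms(1,2,4)]] by simp

lemma sum_sp_subspace:
  assumes "left_vector_space s" "subspace s X" "subspace s Y"
  shows "subspace s (sum_sp X Y)"
  unfolding subspace_def sum_sp_def
proof (intro conjI ballI allI)
  show "0 \<in> {x + y |x y. x \<in> X \<and> y \<in> Y}" using sub_zero[OF assms(2)] sub_zero[OF assms(3)]
    by force
next
  fix p q assume "p \<in> {x + y |x y. x \<in> X \<and> y \<in> Y}" "q \<in> {x + y |x y. x \<in> X \<and> y \<in> Y}"
  then obtain x1 y1 x2 y2 where "p = x1 + y1" "q = x2 + y2" "x1 \<in> X" "x2 \<in> X" "y1 \<in> Y" "y2 \<in> Y"
    by blast
  then show "p + q \<in> {x + y |x y. x \<in> X \<and> y \<in> Y}"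
    using sub_add[OF assms(2)] sub_add[OF assms(3)]
    by (intro CollectI exI[of _ "x1 + x2"] exI[of _ "y1 + y2"]) (simp add: algebra_simps)
next
  fix a p assume "p \<in> {x + y |x y. x \<in> X \<and> y \<in> Y}"
  then obtain x1 y1 where "p = x1 + y1" "x1 \<in> X" "y1 \<in> Y" by blast
  then show "s a p \<in> {x + y |x y. x \<in> X \<and> y \<in> Y}"
    using sub_smul[OF assms(2)] sub_smul[OF assms(3)] lvs_simps(1)[OF assms(1)] by blast
qed

lemma sum_sp_left: "subspace s Y \<Longrightarrow> x \<in> X \<Longrightarrow> x \<in> sum_sp X Y"
  unfolding sum_sp_def using sub_zero by force

lemma sum_sp_right: "subspace s X \<Longrightarrow> y \<in> Y \<Longrightarrow> y \<in> sum_sp X Y"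
  unfolding sum_sp_def using sub_zero by force

theorem lemma4p8:
  fixes smul :: "'k::division_ring \<Rightarrow> 'v::ab_group_add \<Rightarrow> 'v"
    and W E0 E :: "'v set"
  assumes "left_vector_space smul"
    and "dim_gt_2 smul"
    and "W \<in> Gr smul" and "E0 \<in> Gr smul" and "E \<in> Gr smul"
    and "adjacent smul W E0"
    and "distant E E0"
    and "\<not> distant W E"
  shows "is_point smul (W \<inter> E)"
proof -
  let ?s = smul
  have L: "left_vector_space ?s" by fact
  have sW: "subspace ?s W" and sE0: "subspace ?s E0" and sE: "subspace ?s E"
    using assms(3,4,5) unfolding Gr_def by auto
  have c1: "codim1 ?s E0 (sum_sp W E0)" and c2: "codim1 ?s W (sum_sp W E0)"
    using assms(6) unfolding adjacent_def by auto
  have dEE0: "sum_sp E E0 = UNIV" "E \<inter> E0 = {0}" using assms(7) unfolding distant_def by auto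
  obtain v where v: "v \<in> sum_sp W E0" "v \<notin> E0" "sum_sp W E0 = {x + ?s a v | x a. x \<in> E0}"
    using c1 unfolding codim1_def by blast
  obtain e e0 where ee0: "v = e + e0" "e \<in> E" "e0 \<in> E0"
    using dEE0(1) unfolding sum_sp_def by blast
  have ene: "e \<noteq> 0"
  proof
    assume "e = 0"
    then have "v = e0" using ee0(1) by simp
    then show False using v(2) ee0(3) by simp
  qed
  have dec: "\<exists>f a. f \<in> E0 \<and> y = f + ?s a e" if "y \<in> sum_sp W E0" for y
  proof -
    have "y \<in> {x + ?s a v | x a. x \<in> E0}" using that v(3) by simp
    then obtain x a where "x \<in> E0" "y = x + ?s a v" by blast
    note xy = this
    have m: "x + ?s a e0 \<in> E0" using sub_add[OF sE0 xy(1) sub_smul[OF sE0 ee0(3)]] .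
    have "y = (x + ?s a e0) + ?s a e" using xy(2) ee0(1) lvs_simps(1)[OF L, of a e e0]
      by (simp add: algebra_simps)
    then show ?thesis using m by blast
  qed
  have sub1: "W \<inter> E \<subseteq> range (\<lambda>a. ?s a e)"
  proof
    fix y assume y: "y \<in> W \<inter> E"
    then have "y \<in> sum_sp W E0" using sum_sp_left[OF sE0] by blast
    then obtain f a where fa: "f \<in> E0" "y = f + ?s a e" using dec by blast
    have fE: "f \<in> E"
    proof -
      have "f = y - ?s a e" using fa by simp
      moreover have "y - ?s a e \<in> E" using sub_diff[OF L sE] y sub_smul[OF sE ee0(2)] by blast
      ultimately show ?thesis by simp
    qed
    then have "f \<in> E \<inter> E0" using fa(1) by blast
    then have "f = 0" using dEE0(2) by blast
    then show "y \<in> range (\<lambda>a. ?s a e)" using fa by simp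
  qed
  have ex: "\<exists>z\<in>W \<inter> E. z \<noteq> 0"
  proof (rule ccontr)
    assume "\<not> ?thesis"
    then have WE0: "W \<inter> E = {0}" using sub_zero[OF sW] sub_zero[OF sE] by auto
    have sWE: "subspace ?s (sum_sp W E)" by (rule sum_sp_subspace[OF L sW sE])
    obtain u where u: "u \<in> sum_sp W E0" "u \<notin> W" "sum_sp W E0 = {x + ?s a u | x a. x \<in> W}"
      using c2 unfolding codim1_def by blast
    have "\<not> W \<subseteq> E0"
    proof
      assume "W \<subseteq> E0"
      then have "sum_sp W E0 \<subseteq> E0" unfolding sum_sp_def using sub_add[OF sE0] by blast
      then show False using v by blast
    qed
    then obtain w where w: "w \<in> W" "w \<notin> E0" by blast
    then obtain f0 a where fa: "f0 \<in> E0" "w = f0 + ?s a e"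
      using dec sum_sp_left[OF sE0] by blast
    have f0WE: "f0 \<in> sum_sp W E"
    proof -
      have "- ?s a e \<in> E" using sub_neg[OF L sE sub_smul[OF sE ee0(2)]] .
      then show ?thesis using w(1) fa(2) unfolding sum_sp_def
        by (intro CollectI exI[of _ w] exI[of _ "- ?s a e"]) simp
    qed
    have f0W: "f0 \<notin> W"
    proof
      assume "f0 \<in> W"
      then have "w - f0 \<in> W" using sub_diff[OF L sW w(1)] by blast
      moreover have "w - f0 = ?s a e" using fa by simp
      ultimately have "?s a e \<in> W \<inter> E" using sub_smul[OF sE ee0(2)] by simp
      then have "?s a e = 0" using WE0 by blast
      then show False using fa w(2) by simp
    qed
    obtain x2 c where x2: "x2 \<in> W" "f0 = x2 + ?s c u"
      using u(3) sum_sp_right[OF sW fa(1)] by blast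
    have cne: "c \<noteq> 0" using x2 f0W lvs_zero_left[OF L] by auto
    have E0sub: "E0 \<subseteq> sum_sp W E"
    proof
      fix y assume "y \<in> E0"
      then obtain x1 b where x1: "x1 \<in> W" "y = x1 + ?s b u"
        using u(3) sum_sp_right[OF sW] by blast
      have "?s (b * inverse c) f0 = ?s (b * inverse c) x2 + ?s (b * inverse c * c) u"
        using x2(2) lvs_simps(1,3)[OF L] by simp
      also have "?s (b * inverse c * c) u = ?s b u" using cne by (simp add: mult.assoc)
      finally have "y = (x1 - ?s (b * inverse c) x2) + ?s (b * inverse c) f0"
        using x1(2) by (simp add: algebra_simps)
      moreover have "x1 - ?s (b * inverse c) x2 \<in> sum_sp W E"
        using sum_sp_left[OF sE] sub_diff[OF L sW x1(1) sub_smul[OF sW x2(1)]] by blast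
      moreover have "?s (b * inverse c) f0 \<in> sum_sp W E" using sub_smul[OF sWE f0WE] .
      ultimately show "y \<in> sum_sp W E" using sub_add[OF sWE] by simp
    qed
    have "sum_sp W E = UNIV"
    proof (rule set_eqI, simp)
      fix z :: 'v
      have "z \<in> sum_sp E E0" using dEE0 by simp
      then obtain p q where "z = p + q" "p \<in> E" "q \<in> E0" unfolding sum_sp_def by blast
      then show "z \<in> sum_sp W E" using E0sub sum_sp_right[OF sW] sub_add[OF sWE] by blast
    qed
    then have "distant W E" using WE0 unfolding distant_def by simp
    then show False using assms(8) by simp
  qed
  then obtain z where z: "z \<in> W \<inter> E" "z \<noteq> 0" by blast
  then obtain c where zc: "z = ?s c e" using sub1 by blast
  have cne: "c \<noteq> 0" using z zc lvs_zero_left[OF L] by auto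
  have sub2: "range (\<lambda>a. ?s a e) \<subseteq> W \<inter> E"
  proof
    fix y assume "y \<in> range (\<lambda>a. ?s a e)"
    then obtain a where ya: "y = ?s a e" by blast
    have "?s (a * inverse c) z = ?s (a * inverse c * c) e" using zc lvs_simps(3)[OF L] by simp
    also have "\<dots> = y" using cne ya by (simp add: mult.assoc)
    finally show "y \<in> W \<inter> E" using z(1) sub_smul[OF sW] sub_smul[OF sE] by blast
  qed
  show ?thesis unfolding is_point_def using ene sub1 sub2 by blast
qed

end
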